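(* The randomized query complexity of $TARSKI(2,k)$ is $\Omega(k)$: there is a constant $c>0$ such that for every $k\in\mathbb{N}$ it is at least $ck$.
   Context: $TARSKI(2,k)$: given oracle access to an unknown function $f:\{0,1\}^k\to\{0,1\}^k$ that is monotone for the componentwise order ($a\le b$ iff $a_i\le b_i$ for all $i$; monotone means $a\le b\Rightarrow f(a)\le f(b)$), where a query of $v$ returns $f(v)$, find $x$ with $f(x)=x$. The randomized query complexity is the minimum, over randomized algorithms that on every input output a fixed point with probability at least $9/10$, of the worst-case expected number of queries (expectation over the algorithm's coins). *)

theory Defs
  imports "HOL-Probability.Probability"
begin

text \<open>Points of the Boolean hypercube {0,1}^k are bit lists of length k
  (False = 0, True = 1); the order is the componentwise order.\<close>

definition cube :: "nat \<Rightarrow> bool list set" where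
  "cube k = {x. length x = k}"

definition cw_le :: "bool list \<Rightarrow> bool list \<Rightarrow> bool" where
  "cw_le a b \<longleftrightarrow> list_all2 (\<le>) a b"

text \<open>Outside the cube the function is
  fixed to the identity (a canonical convention; only values on the cube matter).\<close>

definition tarski_input :: "nat \<Rightarrow> (bool list \<Rightarrow> bool list) \<Rightarrow> bool" where
  "tarski_input k f \<longleftrightarrow>
     (\<forall>x\<in>cube k. f x \<in> cube k) \<and>
     (\<forall>a\<in>cube k. \<forall>b\<in>cube k. cw_le a b \<longrightarrow> cw_le (f a) (f b)) \<and>
     (\<forall>x. x \<notin> cube k \<longrightarrow> f x = x)"

text \<open>Deterministic query algorithms = decision trees: a node queries a point v and
  branches on the answer f v; a leaf outputs a point.\<close>

datatype dtree = Leaf "bool list" | Query "bool list" "bool list \<Rightarrow> dtree"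

primrec run :: "(bool list \<Rightarrow> bool list) \<Rightarrow> dtree \<Rightarrow> bool list \<times> nat" where
  "run f (Leaf x) = (x, 0)"
| "run f (Query v g) = (let r = run f (g (f v)) in (fst r, Suc (snd r)))"

definition alg_output :: "(bool list \<Rightarrow> bool list) \<Rightarrow> dtree \<Rightarrow> bool list" where
  "alg_output f t = fst (run f t)"

definition num_queries :: "(bool list \<Rightarrow> bool list) \<Rightarrow> dtree \<Rightarrow> nat" where
  "num_queries f t = snd (run f t)"

text \<open>Randomized algorithms = probability distributions over deterministic decision trees.\<close>

definition solves :: "nat \<Rightarrow> dtree pmf \<Rightarrow> bool" where
  "solves k T \<longleftrightarrow> (\<forall>f. tarski_input k f \<longrightarrow>
      measure_pmf.prob T {t. alg_output f t \<in> cube k \<and> f (alg_output f t) = alg_output f t} \<ge> 9/10)"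

definition expected_queries :: "dtree pmf \<Rightarrow> (bool list \<Rightarrow> bool list) \<Rightarrow> ennreal" where
  "expected_queries T f = (\<integral>\<^sup>+ t. ennreal (real (num_queries f t)) \<partial>measure_pmf T)"

definition rand_query_complexity :: "nat \<Rightarrow> ennreal" where
  "rand_query_complexity k =
     (INF T\<in>{T. solves k T}. SUP f\<in>{f. tarski_input k f}. expected_queries T f)"

end

theory Submission
  imports Defs
begin

fun gg :: "bool list \<Rightarrow> bool list \<Rightarrow> bool list" where
  "gg (a#s) (b#v) = (if a = b then a # gg s v else a # replicate (length v) b)"
| "gg _ _ = []"

definition fam :: "nat \<Rightarrow> bool list \<Rightarrow> bool list \<Rightarrow> bool list" where
  "fam k s v = (if length v = k then gg s v else v)"

lemma gg_length: "length s = length v \<Longrightarrow> length (gg s v) = length v"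
  by (induction s v rule: gg.induct) auto

lemma le_repl_True: "length a = n \<Longrightarrow> list_all2 (\<le>) a (replicate n True)"
  by (induction a arbitrary: n) auto

lemma repl_False_le: "length a = n \<Longrightarrow> list_all2 (\<le>) (replicate n False) a"
  by (induction a arbitrary: n) auto

lemma le_repl_True': "length a = n \<Longrightarrow> list_all2 (\<longrightarrow>) a (replicate n True)"
  by (induction a arbitrary: n) auto

lemma repl_False_le': "length a = n \<Longrightarrow> list_all2 (\<longrightarrow>) (replicate n False) a"
  by (induction a arbitrary: n) auto

lemma gg_mono: "length s = length a \<Longrightarrow> list_all2 (\<le>) a b \<Longrightarrow> list_all2 (\<le>) (gg s a) (gg s b)"
proof (induction s arbitrary: a b)
  case Nil then show ?case by (cases a; cases b) auto
next
  case (Cons x s)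
  obtain a0 a' where a: "a = a0 # a'" using Cons.prems by (cases a) auto
  then obtain b0 b' where b: "b = b0 # b'" using Cons.prems by (cases b) auto
  have h: "a0 \<le> b0" "list_all2 (\<le>) a' b'" using Cons.prems(2) unfolding a b by (simp_all only: list_all2_Cons)
  have l: "length a' = length b'" using h(2) list_all2_lengthD by blast
  show ?case using Cons.IH[of a' b'] Cons.prems h l
    by (auto simp: a b le_repl_True' repl_False_le' list_all2_same le_bool_def gg_length)
qed

lemma gg_self: "gg s s = s"
  by (induction s) auto

lemma gg_fix: "length s = length v \<Longrightarrow> gg s v = v \<Longrightarrow> v = s"
  by (induction s v rule: gg.induct) (auto split: if_splits)

lemma fam_input: "length s = k \<Longrightarrow> tarski_input k (fam k s)"
  unfolding tarski_input_def cube_def cw_le_def fam_def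
  using gg_length gg_mono by (auto simp: list_all2_lengthD)

lemma fam_fix: "length s = k \<Longrightarrow> (x \<in> cube k \<and> fam k s x = x) \<longleftrightarrow> x = s"
  unfolding cube_def fam_def using gg_fix gg_self by auto

definition ext :: "nat \<Rightarrow> bool list \<Rightarrow> bool list set" where
  "ext k p = {s. length s = k \<and> take (length p) s = p}"

lemma ext_full: "length p = k \<Longrightarrow> ext k p = {p}"
  unfolding ext_def by auto

lemma ext_split: "length p < k \<Longrightarrow> ext k p = ext k (p @ [True]) \<union> ext k (p @ [False])"
  unfolding ext_def
  by (auto simp: take_Suc_conv_app_nth)


lemma ext_split': "length p < k \<Longrightarrow> ext k p = ext k (p @ [b]) \<union> ext k (p @ [\<not> b])"
  using ext_split[of p k] by (cases b) auto

lemma ext_disj: "ext k (p @ [b]) \<inter> ext k (p @ [\<not> b]) = {}"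
  unfolding ext_def by auto

lemma ext_finite: "finite (ext k p)"
proof -
  have "finite {s. set s \<subseteq> (UNIV::bool set) \<and> length s = k}"
    by (rule finite_lists_length_eq) simp
  then show ?thesis by (rule finite_subset[rotated]) (auto simp: ext_def)
qed

lemma card_ext: "length p \<le> k \<Longrightarrow> card (ext k p) = 2 ^ (k - length p)"
proof (induction "k - length p" arbitrary: p)
  case 0 then show ?case by (simp add: ext_full)
next
  case (Suc m)
  then have "length p < k" by auto
  then have "card (ext k p) = card (ext k (p @ [True])) + card (ext k (p @ [False]))"
    using ext_split'[of p k True] ext_disj[of k p True] ext_finite
    by (simp add: card_Un_disjoint)
  also have "\<dots> = 2 ^ m + 2 ^ m" using Suc(1)[of "p @ [True]"] Suc(1)[of "p @ [False]"] Suc(2) \<open>length p < k\<close>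
    by (simp add: Suc_diff_Suc[symmetric])
  finally show ?case using Suc(2) by (metis mult_2 power_Suc)
qed

lemma gg_const: "take n s = take n s' \<Longrightarrow> take n v \<noteq> take n s \<Longrightarrow> length s = length v
  \<Longrightarrow> length s' = length v \<Longrightarrow> gg s v = gg s' v"
proof (induction n arbitrary: s s' v)
  case 0 then show ?case by simp
next
  case (Suc n)
  obtain x xs where s: "s = x # xs" using Suc.prems by (cases s) auto
  obtain y ys where s': "s' = y # ys" using Suc.prems s by (cases s') auto
  obtain z zs where v: "v = z # zs" using Suc.prems s by (cases v) auto
  have xy: "x = y" "take n xs = take n ys" using Suc.prems(1) s s' by auto
  show ?case
  proof (cases "z = x")
    case True
    then have "take n zs \<noteq> take n xs" using Suc.prems(2) s v by auto
    then show ?thesis using Suc.IH[of xs ys zs] Suc.prems xy True s s' v by auto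
  next
    case False then show ?thesis using xy s s' v by auto
  qed
qed

lemma fam_const: "s \<in> ext k q \<Longrightarrow> s' \<in> ext k q \<Longrightarrow> take (length q) v \<noteq> q \<Longrightarrow> fam k s v = fam k s' v"
  unfolding fam_def ext_def using gg_const[of "length q" s s' v] by auto

definition Qn :: "nat \<Rightarrow> dtree \<Rightarrow> bool list \<Rightarrow> nat" where
  "Qn k t s = num_queries (fam k s) t"

definition Cn :: "nat \<Rightarrow> dtree \<Rightarrow> bool list \<Rightarrow> nat" where
  "Cn k t s = (if alg_output (fam k s) t = s then 1 else 0)"

lemma nq_Query: "num_queries f (Query v h) = Suc (num_queries f (h (f v)))"
  unfolding num_queries_def by (simp add: Let_def)

lemma out_Query: "alg_output f (Query v h) = alg_output f (h (f v))"
  unfolding alg_output_def by (simp add: Let_def)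

lemma sumC_card: "(\<Sum>s\<in>A. Cn k t s) \<le> card A"
  using sum_bounded_above[of A "Cn k t" 1] by (simp add: Cn_def)

lemma sumC_leaf: "finite A \<Longrightarrow> (\<Sum>s\<in>A. Cn k (Leaf ou) s) \<le> 1"
proof -
  assume "finite A"
  have "(\<Sum>s\<in>A. Cn k (Leaf ou) s) = (\<Sum>s\<in>A. if s = ou then 1 else 0)"
    by (rule sum.cong) (auto simp: Cn_def alg_output_def)
  also have "\<dots> \<le> 1" using \<open>finite A\<close> by (simp add: sum.delta)
  finally show ?thesis .
qed


lemma suc_le_pow2: "Suc n \<le> 2 ^ n"
  by (induction n) auto

lemma ext_mem0: "length p \<le> k \<Longrightarrow> p @ replicate (k - length p) False \<in> ext k p"
  unfolding ext_def by auto

lemma main: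
  "length p \<le> k \<Longrightarrow> (k - length p + 1) * (\<Sum>s\<in>ext k p. Cn k t s) \<le> (\<Sum>s\<in>ext k p. 2 * Qn k t s + 1)"
proof (induction t arbitrary: p)
  case (Leaf ou)
  have "(k - length p + 1) * (\<Sum>s\<in>ext k p. Cn k (Leaf ou) s) \<le> (k - length p + 1) * 1"
    using sumC_leaf[OF ext_finite] by (intro mult_le_mono2) auto
  also have "\<dots> \<le> 2 ^ (k - length p)" using suc_le_pow2 by simp
  also have "\<dots> = (\<Sum>s\<in>ext k p. 2 * Qn k (Leaf ou) s + 1)"
    using card_ext[OF Leaf.prems] by (simp add: Qn_def num_queries_def)
  finally show ?case .
next
  case (Query v h)
  let ?C = "\<lambda>p. (\<Sum>s\<in>ext k p. Cn k (Query v h) s)"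
  let ?Q = "\<lambda>p. (\<Sum>s\<in>ext k p. 2 * Qn k (Query v h) s + 1)"
  have strong: "(k - length p + 1) * ?C p + 2 * card (ext k p) \<le> ?Q p"
    if lp: "length p \<le> k" and ca: "\<forall>s\<in>ext k p. fam k s v = a" for p a
  proof -
    have C: "?C p = (\<Sum>s\<in>ext k p. Cn k (h a) s)"
      by (rule sum.cong) (use ca in \<open>auto simp: Cn_def out_Query\<close>)
    have "?Q p = (\<Sum>s\<in>ext k p. (2 * Qn k (h a) s + 1) + 2)"
      by (rule sum.cong) (use ca in \<open>auto simp: Qn_def nq_Query\<close>)
    also have "\<dots> = (\<Sum>s\<in>ext k p. 2 * Qn k (h a) s + 1) + 2 * card (ext k p)"
      unfolding sum.distrib by simp
    finally have Q: "?Q p = (\<Sum>s\<in>ext k p. 2 * Qn k (h a) s + 1) + 2 * card (ext k p)" .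
    have "(k - length p + 1) * (\<Sum>s\<in>ext k p. Cn k (h a) s) \<le> (\<Sum>s\<in>ext k p. 2 * Qn k (h a) s + 1)"
      using Query.IH[of "h a" p] lp by simp
    then show ?thesis using C Q by simp
  qed
  have constcase: "(k - length p + 1) * ?C p \<le> ?Q p"
    if lp: "length p \<le> k" and nc: "length v \<noteq> k \<or> take (length p) v \<noteq> p" for p
  proof -
    let ?s0 = "p @ replicate (k - length p) False"
    have "\<forall>s\<in>ext k p. fam k s v = fam k ?s0 v"
    proof
      fix s assume "s \<in> ext k p"
      then show "fam k s v = fam k ?s0 v"
        using nc fam_const[of s k p ?s0 v] ext_mem0[OF lp] by (auto simp: fam_def)
    qed
    from strong[OF lp this] show ?thesis by simp
  qed
  show ?case
  proof (cases "length v = k \<and> take (length p) v = p")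
    case False then show ?thesis using constcase Query.prems by blast
  next
    case True
    then have lv: "length v = k" by simp
    have inner: "\<forall>n. k - n = m \<longrightarrow> n \<le> k \<longrightarrow> (k - n + 1) * ?C (take n v) \<le> ?Q (take n v)" for m
    proof (induction m)
      case 0
      show ?case
      proof (intro allI impI)
        fix n assume "k - n = 0" "n \<le> k"
        then have n: "n = k" by simp
        have e: "ext k (take n v) = {v}" using n lv ext_full[of v k] by simp
        show "(k - n + 1) * ?C (take n v) \<le> ?Q (take n v)"
          using n e by (simp add: Cn_def)
      qed
    next
      case (Suc m)
      show ?case
      proof (intro allI impI)
        fix n assume kn: "k - n = Suc m" "n \<le> k"
        then have nk: "n < k" by simp
        let ?p = "take n v"
        let ?b = "v ! n"
        have lp: "length ?p = n" using nk lv by simp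
        have tA: "take (Suc n) v = ?p @ [?b]" using nk lv by (simp add: take_Suc_conv_app_nth)
        let ?A = "ext k (?p @ [?b])" and ?B = "ext k (?p @ [\<not> ?b])"
        have split: "ext k ?p = ?A \<union> ?B" using ext_split'[of ?p k ?b] lp nk by simp
        have disj: "?A \<inter> ?B = {}" by (rule ext_disj)
        have IA: "(k - Suc n + 1) * (\<Sum>s\<in>?A. Cn k (Query v h) s) \<le> (\<Sum>s\<in>?A. 2 * Qn k (Query v h) s + 1)"
        proof -
          have "k - Suc n = m" using kn by simp
          then show ?thesis using Suc.IH[rule_format, of "Suc n"] nk tA by simp
        qed
        have IB: "(k - Suc n + 1) * (\<Sum>s\<in>?B. Cn k (Query v h) s) + 2 * card ?B \<le> (\<Sum>s\<in>?B. 2 * Qn k (Query v h) s + 1)"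
        proof -
          have lB: "length (?p @ [\<not> ?b]) \<le> k" using lp nk by simp
          have nB: "take (length (?p @ [\<not> ?b])) v \<noteq> ?p @ [\<not> ?b]" using lp tA by simp
          let ?s0 = "(?p @ [\<not> ?b]) @ replicate (k - length (?p @ [\<not> ?b])) False"
          have "\<forall>s\<in>?B. fam k s v = fam k ?s0 v"
            using fam_const[of _ k "?p @ [\<not> ?b]" ?s0 v] ext_mem0[OF lB] nB by blast
          from strong[OF lB this] show ?thesis using lp by simp
        qed
        have cB: "card ?B = 2 ^ m" using card_ext[of "?p @ [\<not> ?b]" k] lp nk kn by simp
        have cP: "card (ext k ?p) = 2 ^ Suc m" using card_ext[of ?p k] lp nk kn by simp
        have Cle: "?C ?p \<le> card (ext k ?p)" by (rule sumC_card)
        have sC: "?C ?p = (\<Sum>s\<in>?A. Cn k (Query v h) s) + (\<Sum>s\<in>?B. Cn k (Query v h) s)"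
          unfolding split by (rule sum.union_disjoint) (use disj ext_finite in auto)
        have sQ: "?Q ?p = (\<Sum>s\<in>?A. 2 * Qn k (Query v h) s + 1) + (\<Sum>s\<in>?B. 2 * Qn k (Query v h) s + 1)"
          unfolding split by (rule sum.union_disjoint) (use disj ext_finite in auto)
        have r: "k - Suc n + 1 = Suc m" "k - n + 1 = Suc (Suc m)" using kn by auto
        show "(k - n + 1) * ?C ?p \<le> ?Q ?p"
        proof -
          define XA where "XA = (\<Sum>s\<in>?A. Cn k (Query v h) s)"
          define XB where "XB = (\<Sum>s\<in>?B. Cn k (Query v h) s)"
          have e: "Suc (Suc m) * (XA + XB) = Suc m * XA + Suc m * XB + (XA + XB)"
            by (simp add: algebra_simps)
          show ?thesis using IA IB cB cP Cle sC sQ r e unfolding XA_def[symmetric] XB_def[symmetric]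
            by simp
        qed
      qed
    qed
    have "length p \<le> k" by (rule Query.prems)
    then show ?thesis using inner[of "k - length p"] True by auto
  qed
qed


lemma main0: "(k + 1) * (\<Sum>s\<in>cube k. Cn k t s) \<le> (\<Sum>s\<in>cube k. 2 * Qn k t s + 1)"
proof -
  have "ext k [] = cube k" by (auto simp: ext_def cube_def)
  then show ?thesis using main[of "[]" k t] by simp
qed

lemma finite_cube: "finite (cube k)"
proof -
  have "ext k [] = cube k" by (auto simp: ext_def cube_def)
  then show ?thesis using ext_finite[of k "[]"] by simp
qed

lemma card_cube: "card (cube k) = 2 ^ k"
proof -
  have "ext k [] = cube k" by (auto simp: ext_def cube_def)
  then show ?thesis using card_ext[of "[]" k] by simp
qed

lemma pointwise:
  "ennreal (real (k + 1)) * (\<Sum>s\<in>cube k. indicator {t. alg_output (fam k s) t = s} t)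
   \<le> (\<Sum>s\<in>cube k. 2 * ennreal (real (num_queries (fam k s) t)) + 1)"
proof -
  have ind: "indicator {t. alg_output (fam k s) t = s} t = (of_nat (Cn k t s) :: ennreal)" for s
    by (simp add: Cn_def indicator_def)
  have "ennreal (real (k + 1)) * (\<Sum>s\<in>cube k. indicator {t. alg_output (fam k s) t = s} t)
      = (of_nat ((k + 1) * (\<Sum>s\<in>cube k. Cn k t s)) :: ennreal)"
    unfolding ind by (simp only: of_nat_mult of_nat_sum flip: ennreal_of_nat_eq_real_of_nat)
  also have "\<dots> \<le> of_nat (\<Sum>s\<in>cube k. 2 * Qn k t s + 1)"
    using main0[of k t] by (rule of_nat_mono)
  also have "\<dots> = (\<Sum>s\<in>cube k. 2 * ennreal (real (num_queries (fam k s) t)) + 1)"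
    by (simp only: Qn_def of_nat_add of_nat_mult of_nat_sum of_nat_1 of_nat_numeral flip: ennreal_of_nat_eq_real_of_nat)
  finally show ?thesis .
qed


lemma integral_part:
  "ennreal (real (k + 1)) * (\<Sum>s\<in>cube k. emeasure (measure_pmf T) {t. alg_output (fam k s) t = s})
   \<le> (\<Sum>s\<in>cube k. 2 * expected_queries T (fam k s) + 1)"
proof -
  have "ennreal (real (k + 1)) * (\<Sum>s\<in>cube k. emeasure (measure_pmf T) {t. alg_output (fam k s) t = s})
      = (\<integral>\<^sup>+ t. ennreal (real (k + 1)) * (\<Sum>s\<in>cube k. indicator {t. alg_output (fam k s) t = s} t) \<partial>measure_pmf T)"
    by (simp add: nn_integral_cmult nn_integral_sum)
  also have "\<dots> \<le> (\<integral>\<^sup>+ t. (\<Sum>s\<in>cube k. 2 * ennreal (real (num_queries (fam k s) t)) + 1) \<partial>measure_pmf T)"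
    by (rule nn_integral_mono) (rule pointwise)
  also have "\<dots> = (\<Sum>s\<in>cube k. 2 * expected_queries T (fam k s) + 1)"
    by (simp add: nn_integral_sum nn_integral_add nn_integral_cmult expected_queries_def measure_pmf.emeasure_space_1)
  finally show ?thesis .
qed


theorem proposition6:
  shows "\<exists>c::real. c > 0 \<and> (\<forall>k::nat. rand_query_complexity k \<ge> ennreal (c * real k))"
proof (intro exI[of _ "2/5"] conjI allI)
  show "(0::real) < 2/5" by simp
  fix k :: nat
  show "ennreal (2/5 * real k) \<le> rand_query_complexity k"
    unfolding rand_query_complexity_def
  proof (rule INF_greatest)
    fix T assume "T \<in> {T. solves k T}"
    then have sol: "solves k T" by simp
    define M where "M = (SUP f\<in>{f. tarski_input k f}. expected_queries T f)"
    have EM: "expected_queries T (fam k s) \<le> M" if "s \<in> cube k" for s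
      unfolding M_def by (rule SUP_upper) (use that in \<open>simp add: fam_input cube_def\<close>)
    have P: "ennreal (9/10) \<le> emeasure (measure_pmf T) {t. alg_output (fam k s) t = s}"
      if "s \<in> cube k" for s
    proof -
      have ti: "tarski_input k (fam k s)" using that fam_input[of s k] by (simp add: cube_def)
      have eq: "{t. alg_output (fam k s) t \<in> cube k \<and> fam k s (alg_output (fam k s) t) = alg_output (fam k s) t}
          = {t. alg_output (fam k s) t = s}"
        using fam_fix[of s k] that by (auto simp: cube_def)
      have "9/10 \<le> measure_pmf.prob T {t. alg_output (fam k s) t = s}"
        using sol ti eq unfolding solves_def by metis
      then show ?thesis by (simp add: measure_pmf.emeasure_eq_measure)
    qed
    have "ennreal (real (k + 1)) * (of_nat (2 ^ k) * ennreal (9/10))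
        = ennreal (real (k + 1)) * (\<Sum>s\<in>cube k. ennreal (9/10))"
      by (simp add: card_cube)
    also have "\<dots> \<le> ennreal (real (k + 1)) * (\<Sum>s\<in>cube k. emeasure (measure_pmf T) {t. alg_output (fam k s) t = s})"
      by (intro mult_left_mono sum_mono P) auto
    also have "\<dots> \<le> (\<Sum>s\<in>cube k. 2 * expected_queries T (fam k s) + 1)"
      by (rule integral_part)
    also have "\<dots> \<le> (\<Sum>s\<in>cube k. 2 * M + 1)"
      by (intro sum_mono add_right_mono mult_left_mono EM) auto
    also have "\<dots> = of_nat (2 ^ k) * (2 * M + 1)"
      by (simp add: card_cube)
    finally have ineq: "ennreal (real (k + 1)) * (of_nat (2 ^ k) * ennreal (9/10)) \<le> of_nat (2 ^ k) * (2 * M + 1)" .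
    show "ennreal (2/5 * real k) \<le> M"
    proof (cases M)
      case (real m)
      have e1: "(of_nat (2 ^ k) :: ennreal) = ennreal (2 ^ k)"
        by (simp add: ennreal_of_nat_eq_real_of_nat)
      have e2: "ennreal (real (k+1) * (2 ^ k * (9/10))) = ennreal (real (k + 1)) * (ennreal (2 ^ k) * ennreal (9/10))"
      proof -
        have "ennreal (2 ^ k) * ennreal (9/10) = ennreal (2 ^ k * (9/10))"
          by (rule ennreal_mult[symmetric]) auto
        moreover have "ennreal (real (k + 1)) * ennreal (2 ^ k * (9/10)) = ennreal (real (k+1) * (2 ^ k * (9/10)))"
          by (rule ennreal_mult[symmetric]) auto
        ultimately show ?thesis by simp
      qed
      have "ennreal (real (k + 1)) * (of_nat (2 ^ k) * ennreal (9/10)) = ennreal (real (k+1) * (2 ^ k * (9/10)))"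
        unfolding e1 e2 ..
      moreover have "of_nat (2 ^ k) * (2 * M + 1) = ennreal (2 ^ k * (2 * m + 1))"
        using real by (simp add: ennreal_mult' ennreal_of_nat_eq_real_of_nat ennreal_plus[symmetric])
      ultimately have r: "real (k+1) * (2 ^ k * (9/10)) \<le> 2 ^ k * (2 * m + 1)"
        using ineq real by (simp add: ennreal_le_iff)
      have "(2::real) ^ k * (real (k+1) * (9/10)) \<le> 2 ^ k * (2 * m + 1)"
        using r by (simp add: algebra_simps)
      then have r2: "real (k+1) * (9/10) \<le> 2 * m + 1"
        by (simp add: mult_le_cancel_left_pos)
      have "2/5 * real k \<le> m"
      proof (cases "k = 0")
        case True then show ?thesis using real by simp
      next
        case False then have "real k \<ge> 1" by simp
        then show ?thesis using r2 by simp
      qed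
      then show ?thesis using real by (simp add: ennreal_leI)
    next
      case top then show ?thesis by simp
    qed
  qed
qed

end
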